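(* Let $k=k(n)$ and $m=m(n)$ be functions of $n$ such that $m\geq n$ and $\liminf_{n\rightarrow\infty} \frac{k^2n}{m\log n}>1$. Then asymptotically almost surely $G(n,m,k)$ contains no connected component of size $s$ with $e\,n^{8/9}\leq s\leq \min\{m/k,n/2\}$.
   Context: The uniform random intersection graph $G(n,m,k)$ (for positive integers $k\le m$) is the random graph on a set $V$ of $n$ nodes defined as follows: fix a set $M$ of $m$ colours; to each node $v\in V$ assign a subset $F_v\subseteq M$ of exactly $k$ distinct colours, chosen uniformly at random among all $k$-subsets of $M$, independently for different nodes; distinct nodes $u,v$ are joined by an edge if and only if $F_u\cap F_v\neq\emptyset$. An event holds asymptotically almost surely if its probability tends to $1$ as $n\rightarrow\infty$. Here $\log$ denotes the natural logarithm and $e$ is Euler's number. *)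

theory Defs
  imports "HOL-Probability.Probability"
begin

definition colour_sets :: "nat \<Rightarrow> nat \<Rightarrow> nat set set" where
  "colour_sets m k = {F. F \<subseteq> {..<m} \<and> card F = k}"

text \<open>Uniform random intersection graph G(n,m,k) on node set V = {0..<n}:
  the random colour assignment v \<mapsto> F_v, uniform over all assignments of k-subsets
  (equivalently, independent uniform k-subsets for each node).\<close>
definition RIG :: "nat \<Rightarrow> nat \<Rightarrow> nat \<Rightarrow> (nat \<Rightarrow> nat set) pmf" where
  "RIG n m k = pmf_of_set (PiE {..<n} (\<lambda>_. colour_sets m k))"

definition rig_edges :: "nat \<Rightarrow> (nat \<Rightarrow> nat set) \<Rightarrow> (nat \<times> nat) set" where
  "rig_edges n F = {(u, v). u < n \<and> v < n \<and> u \<noteq> v \<and> F u \<inter> F v \<noteq> {}}"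

definition rig_component :: "nat \<Rightarrow> (nat \<Rightarrow> nat set) \<Rightarrow> nat set \<Rightarrow> bool" where
  "rig_component n F C \<longleftrightarrow>
     (\<exists>v<n. C = {u. u < n \<and> (v, u) \<in> (rig_edges n F)\<^sup>*})"

end

theory Submission
  imports Defs
begin

lemma pow_div_fact_le_exp:
  fixes x :: real assumes "0 \<le> x"
  shows "x ^ s / fact s \<le> exp x"
proof -
  have "x ^ s / fact s \<le> (\<Sum>n\<le>s. x ^ n / fact n)"
    using assms by (intro member_le_sum) auto
  also have "\<dots> \<le> exp x"
    using assms summable_exp_generic[of x]
    by (auto simp: exp_def divide_inverse ac_simps intro!: sum_le_suminf)
  finally show ?thesis .
qed

lemma choose_le_exp_pow:
  assumes "s \<ge> 1"
  shows "real (n choose s) \<le> (exp 1 * real n / real s) ^ s"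
proof -
  have f: "fact s > (0::real)" by simp
  have "real (n choose s) * fact s \<le> real n ^ s"
    using binomial_fact_pow[of n s] by (metis of_nat_fact of_nat_le_iff of_nat_mult of_nat_power)
  hence "real (n choose s) \<le> real n ^ s / fact s" using f by (simp add: field_simps)
  also have "\<dots> = (real n / real s) ^ s * (real s ^ s / fact s)"
    using assms by (simp add: field_simps power_divide)
  also have "\<dots> \<le> (real n / real s) ^ s * exp (real s)"
    by (intro mult_left_mono pow_div_fact_le_exp) auto
  also have "exp (real s) = exp 1 ^ s" by (simp add: exp_of_nat_mult[symmetric])
  also have "(real n / real s) ^ s * exp 1 ^ s = (exp 1 * real n / real s) ^ s"
  proof -
    have "exp 1 * real n / real s = (real n / real s) * exp 1" by simp
    thus ?thesis by (simp only: power_mult_distrib)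
  qed
  finally show ?thesis .
qed

lemma choose_ratio_le:
  assumes "a \<le> m"
  shows "real (a choose k) * real m ^ k \<le> real (m choose k) * real a ^ k"
proof (induction k)
  case 0 then show ?case by simp
next
  case (Suc k)
  have e1: "real (a choose Suc k) * (real k + 1) = real (a choose k) * real (a - k)"
    using binomial_absorb_comp[of a k] binomial_absorption[of k a]
    by (metis (mono_tags, lifting) add.commute mult.commute of_nat_Suc of_nat_mult plus_1_eq_Suc)
  have e2: "real (m choose Suc k) * (real k + 1) = real (m choose k) * real (m - k)"
    using binomial_absorb_comp[of m k] binomial_absorption[of k m]
    by (metis (mono_tags, lifting) add.commute mult.commute of_nat_Suc of_nat_mult plus_1_eq_Suc)
  have key: "real (a - k) * real m \<le> real (m - k) * real a"
  proof (cases "k \<le> a")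
    case True
    then have "k \<le> m" using assms by simp
    moreover have "real a * real k \<le> real k * real m" using assms
      by (metis mult.commute mult_left_mono of_nat_0_le_iff of_nat_mono)
    ultimately show ?thesis using True assms by (simp add: of_nat_diff algebra_simps)
  next
    case False then show ?thesis by simp
  qed
  have "real (a choose Suc k) * real m ^ Suc k * (real k + 1)
        = (real (a choose Suc k) * (real k + 1)) * real m ^ Suc k" by (simp add: ac_simps)
  also have "\<dots> = (real (a choose k) * real m ^ k) * (real (a - k) * real m)"
    unfolding e1 by (simp add: ac_simps)
  also have "\<dots> \<le> (real (m choose k) * real a ^ k) * (real (m - k) * real a)"
    by (rule mult_mono) (use Suc.IH key in auto)
  also have "\<dots> = (real (m choose Suc k) * (real k + 1)) * real a ^ Suc k"
    unfolding e2 by (simp add: ac_simps)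
  also have "\<dots> = real (m choose Suc k) * real a ^ Suc k * (real k + 1)" by (simp add: ac_simps)
  finally show ?case by (simp del: of_nat_Suc)
qed



definition closedS :: "nat \<Rightarrow> (nat \<Rightarrow> nat set) \<Rightarrow> nat set \<Rightarrow> bool" where
  "closedS n F S \<longleftrightarrow> (\<forall>u\<in>S. \<forall>v\<in>{..<n}-S. F u \<inter> F v = {})"

lemma component_closed:
  assumes "rig_component n F C"
  shows "C \<subseteq> {..<n}" "closedS n F C"
proof -
  obtain v where v: "v < n" and C: "C = {u. u < n \<and> (v, u) \<in> (rig_edges n F)\<^sup>*}"
    using assms unfolding rig_component_def by blast
  show "C \<subseteq> {..<n}" using C by auto
  show "closedS n F C" unfolding closedS_def
  proof (intro ballI)
    fix u w assume u: "u \<in> C" and w: "w \<in> {..<n} - C"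
    show "F u \<inter> F w = {}"
    proof (rule ccontr)
      assume ne: "F u \<inter> F w \<noteq> {}"
      have uC: "u < n" "(v, u) \<in> (rig_edges n F)\<^sup>*" using u C by auto
      have wn: "w < n" "w \<notin> C" using w by auto
      have "u \<noteq> w" using u wn by auto
      hence "(u, w) \<in> rig_edges n F" using uC wn ne unfolding rig_edges_def by simp
      hence "(v, w) \<in> (rig_edges n F)\<^sup>*" using uC(2) by (rule rtrancl.rtrancl_into_rtrancl[rotated])
      hence "w \<in> C" using wn(1) C by simp
      thus False using wn by simp
    qed
  qed
qed

lemma card_colour_sets: "card (colour_sets m k) = m choose k"
  unfolding colour_sets_def using n_subsets[of "{..<m}" k] by simp

lemma finite_colour_sets: "finite (colour_sets m k)"
  unfolding colour_sets_def by (rule finite_subset[of _ "Pow {..<m}"]) auto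

lemma card_AT:
  assumes S: "S \<subseteq> {..<n}" and T: "T \<subseteq> {..<m}"
  shows "card {F \<in> PiE {..<n} (\<lambda>_. colour_sets m k). \<forall>v\<in>S. F v \<subseteq> T}
         = (card T choose k) ^ card S * (m choose k) ^ (n - card S)"
proof -
  have eq: "{F \<in> PiE {..<n} (\<lambda>_. colour_sets m k). \<forall>v\<in>S. F v \<subseteq> T}
        = PiE {..<n} (\<lambda>v. if v \<in> S then {X. X \<subseteq> T \<and> card X = k} else colour_sets m k)"
  proof (intro set_eqI iffI)
    fix F assume F: "F \<in> {F \<in> PiE {..<n} (\<lambda>_. colour_sets m k). \<forall>v\<in>S. F v \<subseteq> T}"
    show "F \<in> PiE {..<n} (\<lambda>v. if v \<in> S then {X. X \<subseteq> T \<and> card X = k} else colour_sets m k)"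
      using F unfolding PiE_iff colour_sets_def by auto
  next
    fix F assume F: "F \<in> PiE {..<n} (\<lambda>v. if v \<in> S then {X. X \<subseteq> T \<and> card X = k} else colour_sets m k)"
    have "\<forall>i\<in>{..<n}. F i \<in> colour_sets m k"
    proof
      fix i assume i: "i \<in> {..<n}"
      have Fi: "F i \<in> (if i \<in> S then {X. X \<subseteq> T \<and> card X = k} else colour_sets m k)"
        using F i by (auto simp: PiE_iff)
      thus "F i \<in> colour_sets m k" using T unfolding colour_sets_def
        by (cases "i \<in> S") auto
    qed
    moreover have "\<forall>v\<in>S. F v \<subseteq> T"
    proof
      fix v assume v: "v \<in> S"
      hence "F v \<in> (if v \<in> S then {X. X \<subseteq> T \<and> card X = k} else colour_sets m k)"
        using PiE_mem[OF F, of v] v S by blast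
      thus "F v \<subseteq> T" using v by simp
    qed
    ultimately show "F \<in> {F \<in> PiE {..<n} (\<lambda>_. colour_sets m k). \<forall>v\<in>S. F v \<subseteq> T}"
      using F S unfolding PiE_iff by auto
  qed
  have "card (PiE {..<n} (\<lambda>v. if v \<in> S then {X. X \<subseteq> T \<and> card X = k} else colour_sets m k))
      = (\<Prod>v<n. if v \<in> S then card T choose k else m choose k)"
    using T finite_subset[OF T]
    by (subst card_PiE) (auto intro!: prod.cong simp: n_subsets card_colour_sets)
  also have "\<dots> = (\<Prod>v\<in>{..<n} \<inter> {v. v \<in> S}. card T choose k) * (\<Prod>v\<in>{..<n} \<inter> - {v. v \<in> S}. m choose k)"
    by (rule prod.If_cases) simp
  also have "{..<n} \<inter> {v. v \<in> S} = S" using S by auto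
  also have "card ({..<n} \<inter> - {v. v \<in> S}) = n - card S"
  proof -
    have "{..<n} \<inter> - {v. v \<in> S} = {..<n} - S" by auto
    thus ?thesis using S by (simp add: card_Diff_subset finite_subset)
  qed
  hence "(\<Prod>v\<in>{..<n} \<inter> - {v. v \<in> S}. m choose k) = (m choose k) ^ (n - card S)" by simp
  finally show ?thesis using eq by simp
qed

lemma UnS_sub:
  assumes "F \<in> PiE {..<n} (\<lambda>_. colour_sets m k)" "S \<subseteq> {..<n}"
  shows "\<Union>(F ` S) \<subseteq> {..<m}"
proof -
  have "\<And>v. v \<in> S \<Longrightarrow> F v \<subseteq> {..<m}"
  proof -
    fix v assume "v \<in> S"
    hence "F v \<in> colour_sets m k" using PiE_mem[OF assms(1), of v] assms(2) by blast
    thus "F v \<subseteq> {..<m}" unfolding colour_sets_def by simp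
  qed
  thus ?thesis by blast
qed

lemma A_bound:
  assumes S: "S \<subseteq> {..<n}"
  shows "card {F \<in> PiE {..<n} (\<lambda>_. colour_sets m k). card (\<Union>(F ` S)) < u0}
     \<le> (\<Sum>u<u0. (m choose u) * (u choose k) ^ card S * (m choose k) ^ (n - card S))"
proof -
  let ?Om = "PiE {..<n} (\<lambda>_. colour_sets m k)"
  let ?A = "\<lambda>T. {F \<in> ?Om. \<forall>v\<in>S. F v \<subseteq> T}"
  let ?Ts = "\<lambda>u. {T. T \<subseteq> {..<m} \<and> card T = u}"
  have sub: "{F \<in> ?Om. card (\<Union>(F ` S)) < u0} \<subseteq> (\<Union>u\<in>{..<u0}. \<Union>T\<in>?Ts u. ?A T)"
  proof
    fix F assume F: "F \<in> {F \<in> ?Om. card (\<Union>(F ` S)) < u0}"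
    hence "\<Union>(F ` S) \<subseteq> {..<m}" using UnS_sub S by blast
    thus "F \<in> (\<Union>u\<in>{..<u0}. \<Union>T\<in>?Ts u. ?A T)" using F
      by (intro UN_I[of "card (\<Union>(F ` S))"] UN_I[of "\<Union>(F ` S)"]) auto
  qed
  have fin: "finite (?Ts u)" for u by (rule finite_subset[of _ "Pow {..<m}"]) auto
  have "card {F \<in> ?Om. card (\<Union>(F ` S)) < u0} \<le> card (\<Union>u\<in>{..<u0}. \<Union>T\<in>?Ts u. ?A T)"
    by (rule card_mono) (auto intro!: finite_UN_I fin finite_PiE finite_colour_sets sub)
  also have "\<dots> \<le> (\<Sum>u<u0. card (\<Union>T\<in>?Ts u. ?A T))" by (rule card_UN_le) simp
  also have "\<dots> \<le> (\<Sum>u<u0. \<Sum>T\<in>?Ts u. card (?A T))"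
    by (intro sum_mono card_UN_le fin)
  also have "\<dots> = (\<Sum>u<u0. \<Sum>T\<in>?Ts u. (u choose k) ^ card S * (m choose k) ^ (n - card S))"
    by (intro sum.cong refl) (simp add: card_AT[OF S])
  also have "\<dots> = (\<Sum>u<u0. (m choose u) * (u choose k) ^ card S * (m choose k) ^ (n - card S))"
    by (intro sum.cong refl) (simp add: n_subsets)
  finally show ?thesis .
qed

lemma L_bound:
  assumes S: "S \<subseteq> {..<n}"
  shows "card {F \<in> PiE {..<n} (\<lambda>_. colour_sets m k). u0 \<le> card (\<Union>(F ` S)) \<and> closedS n F S}
     \<le> (m choose k) ^ card S * (m - u0 choose k) ^ (n - card S)"
proof -
  let ?Om = "PiE {..<n} (\<lambda>_. colour_sets m k)"
  let ?L = "{F \<in> ?Om. u0 \<le> card (\<Union>(F ` S)) \<and> closedS n F S}"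
  let ?D = "{..<n} - S"
  let ?P = "{G \<in> PiE S (\<lambda>_. colour_sets m k). u0 \<le> card (\<Union>(G ` S))}"
  let ?Q = "\<lambda>G. PiE ?D (\<lambda>_. {X. X \<subseteq> {..<m} - \<Union>(G ` S) \<and> card X = k})"
  let ?f = "\<lambda>F. (restrict F S, restrict F ?D)"
  have finS: "finite S" using S finite_subset by blast
  have finP: "finite ?P" by (auto intro!: finite_PiE finS finite_colour_sets)
  have finQ: "finite (?Q G)" for G
    by (intro finite_PiE) (auto intro: finite_subset[of _ "Pow {..<m}"])
  have inj: "inj_on ?f ?L"
  proof (rule inj_onI)
    fix F F' assume F: "F \<in> ?L" and F': "F' \<in> ?L" and eq: "?f F = ?f F'"
    show "F = F'"
    proof
      fix x
      show "F x = F' x"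
      proof (cases "x < n")
        case True
        have e1: "restrict F S = restrict F' S" and e2: "restrict F ?D = restrict F' ?D"
          using eq by auto
        show ?thesis
        proof (cases "x \<in> S")
          case True
          then show ?thesis using fun_cong[OF e1, of x] by simp
        next
          case False
          then show ?thesis using fun_cong[OF e2, of x] \<open>x < n\<close> by simp
        qed
      next
        case False
        then have "F x = undefined" "F' x = undefined" using F F' by (auto simp: PiE_def extensional_def)
        then show ?thesis by simp
      qed
    qed
  qed
  have img: "?f ` ?L \<subseteq> Sigma ?P ?Q"
  proof
    fix p assume "p \<in> ?f ` ?L"
    then obtain F where F: "F \<in> ?L" and p: "p = ?f F" by blast
    have FOm: "F \<in> ?Om" using F by blast
    have Fv: "F v \<in> colour_sets m k" if "v < n" for v using PiE_mem[OF FOm, of v] that by blast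
    have U: "\<Union>(restrict F S ` S) = \<Union>(F ` S)" by auto
    have "restrict F S \<in> ?P" using F Fv S U by (auto simp: PiE_iff)
    moreover have "restrict F ?D \<in> ?Q (restrict F S)"
    proof -
      have "F v \<subseteq> {..<m} - \<Union>(F ` S) \<and> card (F v) = k" if v: "v \<in> ?D" for v
      proof -
        have "F v \<inter> \<Union>(F ` S) = {}" using F v unfolding closedS_def by blast
        thus ?thesis using Fv[of v] v unfolding colour_sets_def by auto
      qed
      thus ?thesis unfolding U by (auto simp: PiE_iff)
    qed
    ultimately show "p \<in> Sigma ?P ?Q" using p by auto
  qed
  have "card ?L \<le> card (Sigma ?P ?Q)"
    by (rule card_inj_on_le[OF inj img]) (auto intro: finite_SigmaI finP finQ)
  also have "\<dots> = (\<Sum>G\<in>?P. card (?Q G))" by (rule card_SigmaI) (auto intro: finP finQ)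
  also have "\<dots> \<le> (\<Sum>G\<in>?P. (m - u0 choose k) ^ (n - card S))"
  proof (rule sum_mono)
    fix G assume G: "G \<in> ?P"
    have Gv: "G v \<in> colour_sets m k" if "v \<in> S" for v using G that by (auto simp: PiE_iff)
    have Usub: "\<Union>(G ` S) \<subseteq> {..<m}" using Gv unfolding colour_sets_def by blast
    have cU: "card ({..<m} - \<Union>(G ` S)) = m - card (\<Union>(G ` S))"
      using Usub by (simp add: card_Diff_subset finite_subset)
    have cD: "card ?D = n - card S" using S by (simp add: card_Diff_subset finS)
    have "card (?Q G) = (card ({..<m} - \<Union>(G ` S)) choose k) ^ (n - card S)"
      by (subst card_PiE) (auto simp: n_subsets cD)
    also have "\<dots> \<le> (m - u0 choose k) ^ (n - card S)"
      unfolding cU using G by (intro power_mono binomial_right_mono) auto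
    finally show "card (?Q G) \<le> (m - u0 choose k) ^ (n - card S)" .
  qed
  also have "\<dots> = card ?P * (m - u0 choose k) ^ (n - card S)" by simp
  also have "\<dots> \<le> card (PiE S (\<lambda>_. colour_sets m k)) * (m - u0 choose k) ^ (n - card S)"
    by (intro mult_right_mono card_mono) (auto intro!: finite_PiE finS finite_colour_sets)
  also have "card (PiE S (\<lambda>_. colour_sets m k)) = (m choose k) ^ card S"
    by (simp add: card_PiE finS card_colour_sets)
  finally show ?thesis .
qed



lemma total_bound:
  assumes R: "R \<subseteq> {..n}"
  shows "card (PiE {..<n} (\<lambda>_. colour_sets m k) \<inter> {F. \<exists>C. rig_component n F C \<and> card C \<in> R})
   \<le> (\<Sum>s\<in>R. (n choose s) * ((m choose k) ^ s * (m - u0 s choose k) ^ (n - s)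
         + (\<Sum>u<u0 s. (m choose u) * (u choose k) ^ s * (m choose k) ^ (n - s))))"
proof -
  let ?Om = "PiE {..<n} (\<lambda>_. colour_sets m k)"
  let ?Ss = "\<lambda>s. {S. S \<subseteq> {..<n} \<and> card S = s}"
  let ?L = "\<lambda>s S. {F \<in> ?Om. u0 s \<le> card (\<Union>(F ` S)) \<and> closedS n F S}"
  let ?A = "\<lambda>s S. {F \<in> ?Om. card (\<Union>(F ` S)) < u0 s}"
  have finR: "finite R" using R finite_subset by blast
  have finSs: "finite (?Ss s)" for s by (rule finite_subset[of _ "Pow {..<n}"]) auto
  have finOm: "finite ?Om" by (intro finite_PiE finite_colour_sets) simp
  have sub: "?Om \<inter> {F. \<exists>C. rig_component n F C \<and> card C \<in> R} \<subseteq> (\<Union>s\<in>R. \<Union>S\<in>?Ss s. ?L s S \<union> ?A s S)"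
  proof
    fix F assume F: "F \<in> ?Om \<inter> {F. \<exists>C. rig_component n F C \<and> card C \<in> R}"
    then obtain C where C: "rig_component n F C" "card C \<in> R" by blast
    have "C \<subseteq> {..<n}" "closedS n F C" using component_closed[OF C(1)] by auto
    thus "F \<in> (\<Union>s\<in>R. \<Union>S\<in>?Ss s. ?L s S \<union> ?A s S)" using F C
      by (intro UN_I[of "card C"] UN_I[of C]) auto
  qed
  have "card (?Om \<inter> {F. \<exists>C. rig_component n F C \<and> card C \<in> R}) \<le> card (\<Union>s\<in>R. \<Union>S\<in>?Ss s. ?L s S \<union> ?A s S)"
    by (rule card_mono[OF _ sub]) (auto intro!: finite_UN_I finR finSs intro: finite_subset[OF _ finOm])
  also have "\<dots> \<le> (\<Sum>s\<in>R. card (\<Union>S\<in>?Ss s. ?L s S \<union> ?A s S))" by (rule card_UN_le[OF finR])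
  also have "\<dots> \<le> (\<Sum>s\<in>R. \<Sum>S\<in>?Ss s. card (?L s S \<union> ?A s S))"
    by (intro sum_mono card_UN_le finSs)
  also have "\<dots> \<le> (\<Sum>s\<in>R. \<Sum>S\<in>?Ss s. card (?L s S) + card (?A s S))"
    by (intro sum_mono card_Un_le)
  also have "\<dots> \<le> (\<Sum>s\<in>R. \<Sum>S\<in>?Ss s. (m choose k) ^ s * (m - u0 s choose k) ^ (n - s)
         + (\<Sum>u<u0 s. (m choose u) * (u choose k) ^ s * (m choose k) ^ (n - s)))"
  proof (intro sum_mono add_mono)
    fix s S assume "S \<in> ?Ss s"
    hence S: "S \<subseteq> {..<n}" "card S = s" by auto
    show "card (?L s S) \<le> (m choose k) ^ s * (m - u0 s choose k) ^ (n - s)"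
      using L_bound[OF S(1), of m k "u0 s"] S(2) by simp
    show "card (?A s S) \<le> (\<Sum>u<u0 s. (m choose u) * (u choose k) ^ s * (m choose k) ^ (n - s))"
      using A_bound[OF S(1), of m k "u0 s"] S(2) by simp
  qed
  also have "\<dots> = (\<Sum>s\<in>R. (n choose s) * ((m choose k) ^ s * (m - u0 s choose k) ^ (n - s)
         + (\<Sum>u<u0 s. (m choose u) * (u choose k) ^ s * (m choose k) ^ (n - s))))"
    by (intro sum.cong refl) (simp add: n_subsets)
  finally show ?thesis .
qed

lemma prob_bound:
  assumes R: "R \<subseteq> {..n}" and km: "k \<le> m"
  shows "measure_pmf.prob (RIG n m k) {F. \<exists>C. rig_component n F C \<and> card C \<in> R}
   \<le> (\<Sum>s\<in>R. real (n choose s) * ((real (m - u0 s choose k) / real (m choose k)) ^ (n - s)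
         + (\<Sum>u<u0 s. real (m choose u) * (real (u choose k) / real (m choose k)) ^ s)))"
proof -
  let ?Om = "PiE {..<n} (\<lambda>_. colour_sets m k)"
  let ?E = "{F. \<exists>C. rig_component n F C \<and> card C \<in> R}"
  have finOm: "finite ?Om" by (intro finite_PiE finite_colour_sets) simp
  have cpos: "(m choose k) > 0" using km by simp
  have cOm: "card ?Om = (m choose k) ^ n" by (simp add: card_PiE card_colour_sets)
  hence "card ?Om > 0" using cpos by simp
  hence ne: "?Om \<noteq> {}" by auto
  have "measure_pmf.prob (RIG n m k) ?E = card (?Om \<inter> ?E) / card ?Om"
    unfolding RIG_def by (rule measure_pmf_of_set[OF ne finOm])
  also have "\<dots> \<le> real (\<Sum>s\<in>R. (n choose s) * ((m choose k) ^ s * (m - u0 s choose k) ^ (n - s)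
         + (\<Sum>u<u0 s. (m choose u) * (u choose k) ^ s * (m choose k) ^ (n - s)))) / card ?Om"
    by (intro divide_right_mono of_nat_mono total_bound[OF R]) simp
  also have "\<dots> = (\<Sum>s\<in>R. real (n choose s) * ((real (m - u0 s choose k) / real (m choose k)) ^ (n - s)
         + (\<Sum>u<u0 s. real (m choose u) * (real (u choose k) / real (m choose k)) ^ s)))"
    unfolding cOm of_nat_sum sum_divide_distrib
  proof (intro sum.cong refl)
    fix s assume "s \<in> R"
    hence sn: "s \<le> n" using R by auto
    have split: "real (m choose k) ^ n = real (m choose k) ^ s * real (m choose k) ^ (n - s)"
      using sn by (simp add: power_add[symmetric])
    have c0: "real (m choose k) \<noteq> 0" using cpos by simp
    show "real ((n choose s) * ((m choose k) ^ s * (m - u0 s choose k) ^ (n - s)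
         + (\<Sum>u<u0 s. (m choose u) * (u choose k) ^ s * (m choose k) ^ (n - s)))) / real ((m choose k) ^ n)
       = real (n choose s) * ((real (m - u0 s choose k) / real (m choose k)) ^ (n - s)
         + (\<Sum>u<u0 s. real (m choose u) * (real (u choose k) / real (m choose k)) ^ s))"
      unfolding of_nat_mult of_nat_add of_nat_power of_nat_sum split
      using c0 by (simp add: field_simps power_divide sum_divide_distrib sum_distrib_left sum_distrib_right)
  qed
  finally show ?thesis .
qed



lemma ln4_ge: "ln (4::real) \<ge> 4/3"
proof -
  have "ln (4::real) = 2 * ln 2" using ln_realpow[of 2 2] by simp
  thus ?thesis using ln2_ge_two_thirds by simp
qed

lemma ln_k_bound:
  fixes k :: real assumes "k > 0"
  shows "ln k \<le> 1 + k / 4"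
proof -
  have e2: "exp (2::real) \<ge> 4"
  proof -
    have "exp (2::real) = exp 1 * exp 1" by (simp add: exp_add[symmetric])
    moreover have "exp (1::real) \<ge> 2" using exp_ge_add_one_self[of "1::real"] by simp
    ultimately have "exp 1 * exp 1 \<ge> (2::real) * 2" by (intro mult_mono) auto
    thus ?thesis using \<open>exp (2::real) = exp 1 * exp 1\<close> by simp
  qed
  have "ln (k / exp 2) \<le> k / exp 2 - 1" using assms by (intro ln_le_minus_one) auto
  hence "ln k - 2 \<le> k / exp 2 - 1" using assms by (simp add: ln_div)
  moreover have "k / exp 2 \<le> k / 4" using assms e2 by (intro divide_left_mono) auto
  ultimately show ?thesis by linarith
qed

lemma key_ineq:
  fixes k L lnr :: real
  assumes k: "k \<ge> 30" and L: "L \<ge> 0" and r1: "lnr \<ge> ln 4" and r2: "lnr \<ge> ln 4 + L - ln k"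
  shows "1 + L + 3 * k / 8 \<le> 3 * k / 4 * lnr"
proof (cases "1 + L \<le> 3/5 * k")
  case True
  have "3 * k / 4 * (4/3) \<le> 3 * k / 4 * lnr" using r1 ln4_ge k by (intro mult_left_mono) auto
  thus ?thesis using True k by linarith
next
  case False
  have "ln k \<le> 1 + k / 4" using ln_k_bound k by simp
  hence "ln k \<le> L / 2" using False k by simp
  hence "lnr \<ge> 4/3 + L / 2" using r2 ln4_ge by simp
  hence "3 * k / 4 * (4/3 + L/2) \<le> 3 * k / 4 * lnr" using k by (intro mult_left_mono) auto
  moreover have "1 + L + 3 * k / 8 \<le> 3 * k / 4 * (4/3 + L/2)"
  proof -
    have "1 * L \<le> (3 * k / 8) * L" using L k by (intro mult_right_mono) auto
    thus ?thesis using k by (simp add: algebra_simps)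
  qed
  ultimately show ?thesis by linarith
qed

lemma pow_exp_ln: "a > 0 \<Longrightarrow> (a::real) ^ j = exp (real j * ln a)"
  by (metis exp_ln ln_realpow zero_less_power)

lemma small_term:
  fixes n m k s u :: nat
  assumes u1: "1 \<le> u" and us: "real u < real s * real k / 4" and s1: "1 \<le> s" and sn: "s \<le> n"
    and k30: "30 \<le> k" and skm: "s * k \<le> m" and nm: "n \<le> m"
  shows "(exp 1 * real n / real s) ^ s * (exp 1 * real m / real u) ^ u * (real u / real m) ^ (k * s)
         \<le> exp (- (real s * real k) / 8)"
proof -
  have sp: "real s > 0" "real n > 0" "real u > 0" "real k > 0" using s1 sn u1 k30 by auto
  have mge: "real m \<ge> real s * real k" using skm by (metis of_nat_le_iff of_nat_mult)
  have mp: "real m > 0" using mge sp by (metis mult_pos_pos order_less_le_trans)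
  define x where "x = real s * real k"
  have xp: "x > 0" using sp by (simp add: x_def)
  define L where "L = ln (real n) - ln (real s)"
  define lq where "lq = ln (real u) - ln (real m)"
  define ly where "ly = ln x - ln 4 - ln (real m)"
  have e1: "(exp 1 * real n / real s) ^ s = exp (real s * (1 + L))"
    using sp by (subst pow_exp_ln) (auto simp: L_def ln_mult ln_div)
  have e2: "(exp 1 * real m / real u) ^ u = exp (real u * (1 - lq))"
    using sp mp by (subst pow_exp_ln) (auto simp: lq_def ln_mult ln_div)
  have e3: "(real u / real m) ^ (k * s) = exp (x * lq)"
    using sp mp by (subst pow_exp_ln) (auto simp: lq_def ln_div x_def mult.commute)
  have L0: "L \<ge> 0" using sn sp unfolding L_def by simp
  have lqly: "lq \<le> ly"
  proof -
    have "real u \<le> x / 4" using us by (simp add: x_def)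
    hence "ln (real u) \<le> ln (x / 4)" using sp by simp
    thus ?thesis using xp by (simp add: lq_def ly_def ln_div)
  qed
  have ly0: "ly \<le> - ln 4"
  proof -
    have "ln x \<le> ln (real m)" using mge xp by (simp add: x_def)
    thus ?thesis by (simp add: ly_def)
  qed
  have ux: "real u \<le> x / 4" using us by (simp add: x_def)
  have t1: "(x - real u) * lq \<le> (x - real u) * ly"
    using lqly ux xp by (intro mult_left_mono) auto
  have t2: "(x - real u) * ly \<le> (3 * x / 4) * ly"
  proof -
    have "ly \<le> 0" using ly0 ln4_ge by linarith
    thus ?thesis using ux by (intro mult_right_mono_neg) auto
  qed
  have key: "1 + L + 3 * real k / 8 \<le> 3 * real k / 4 * (- ly)"
  proof (rule key_ineq)
    show "30 \<le> real k" using k30 by simp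
    show "0 \<le> L" by (rule L0)
    show "ln 4 \<le> - ly" using ly0 by simp
    have "ln (real n) \<le> ln (real m)" using nm sp by simp
    moreover have "ln x = ln (real s) + ln (real k)" using sp by (simp add: x_def ln_mult)
    ultimately show "ln 4 + L - ln (real k) \<le> - ly" by (simp add: ly_def L_def)
  qed
  have key2: "real s * (1 + L + 3 * real k / 8) \<le> real s * (3 * real k / 4 * (- ly))"
    using key sp by (intro mult_left_mono) auto
  have id2: "real s * (1 + L) + x / 4 + (3 * x / 4) * ly
     = real s * (1 + L + 3 * real k / 8) - real s * (3 * real k / 4 * (- ly)) - x / 8"
    by (simp add: x_def algebra_simps)
  have "real s * (1 + L) + real u * (1 - lq) + x * lq \<le> - x / 8"
  proof -
    have "real s * (1 + L) + real u * (1 - lq) + x * lq = real s * (1 + L) + real u + (x - real u) * lq"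
      by (simp add: algebra_simps)
    also have "\<dots> \<le> real s * (1 + L) + x / 4 + (3 * x / 4) * ly" using t1 t2 ux by linarith
    also have "\<dots> \<le> - x / 8" using key2 id2 by linarith
    finally show ?thesis .
  qed
  hence "exp (real s * (1 + L)) * exp (real u * (1 - lq)) * exp (x * lq) \<le> exp (- x / 8)"
    by (simp add: exp_add[symmetric])
  thus ?thesis using e1 e2 e3 by (simp add: x_def)
qed

lemma ratio_le:
  assumes "a \<le> m" "k \<le> m" "m > 0"
  shows "real (a choose k) / real (m choose k) \<le> (real a / real m) ^ k"
proof -
  have c: "real (m choose k) > 0" using assms by simp
  have "real (a choose k) * real m ^ k \<le> real (m choose k) * real a ^ k"
    by (rule choose_ratio_le[OF assms(1)])
  thus ?thesis using c assms(3) by (simp add: field_simps power_divide)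
qed

lemma per_s:
  fixes n m k s :: nat
  assumes k1: "1 \<le> k" and km: "k \<le> m" and nm: "n \<le> m"
    and hk: "real m * ln (real n) \<le> real k ^ 2 * real n" and ln1: "ln (real n) \<ge> 1"
    and k30: "30 \<le> k" and s0: "exp 1 * real n powr (8/9) \<le> real s"
    and sn2: "real s \<le> real n / 2" and skm: "s * k \<le> m" and x1024: "real s * real k \<ge> 1024"
  shows "real (n choose s) * ((real (m - nat \<lceil>real s * real k / 4\<rceil> choose k) / real (m choose k)) ^ (n - s)
         + (\<Sum>u<nat \<lceil>real s * real k / 4\<rceil>. real (m choose u) * (real (u choose k) / real (m choose k)) ^ s))
         \<le> 2 * exp (- real s / 72)"
proof -
  define u0 where "u0 = nat \<lceil>real s * real k / 4\<rceil>"
  define x where "x = real s * real k"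
  define \<Lambda> where "\<Lambda> = ln (real n)"
  have np: "real n > 0" using ln1 by (cases "n = 0") auto
  have "exp 1 * real n powr (8/9) > 0" using np by simp
  hence sp: "real s > 0" using s0 by linarith
  have s1: "1 \<le> s" using sp by simp
  have sn: "s \<le> n" using sn2 np by linarith
  have mp: "m > 0" using km k1 by simp
  have mge: "real m \<ge> x" unfolding x_def using skm by (metis of_nat_le_iff of_nat_mult)
  have xk: "x \<ge> real s" unfolding x_def using k1 sp by simp
  have cge: "\<lceil>x / 4\<rceil> \<ge> 0" using xk sp by simp
  have u0i: "real u0 = real_of_int \<lceil>x / 4\<rceil>" unfolding u0_def x_def using cge unfolding x_def by simp
  have u0a: "real u0 \<ge> x / 4" unfolding u0i by (rule le_of_int_ceiling)
  have u0b: "real u0 \<le> x / 4 + 1" unfolding u0i by (rule of_int_ceiling_le_add_one)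
  have "real u0 \<le> real m" using u0b mge x1024 unfolding x_def by linarith
  hence u0m: "u0 \<le> m" by simp
  have ens: "exp 1 * real n / real s \<le> exp (\<Lambda> / 9)"
  proof -
    have "real n powr (8/9) = exp (8/9 * \<Lambda>)" using np by (simp add: powr_def \<Lambda>_def)
    hence "exp 1 * exp (8/9 * \<Lambda>) \<le> real s" using s0 by simp
    hence "exp 1 * real n / real s \<le> exp 1 * real n / (exp 1 * exp (8/9 * \<Lambda>))"
      using sp np by (intro divide_left_mono) auto
    also have "\<dots> = exp \<Lambda> / exp (8/9 * \<Lambda>)" using np by (simp add: \<Lambda>_def)
    also have "\<dots> = exp (\<Lambda> / 9)" by (simp add: exp_diff[symmetric])
    finally show ?thesis .
  qed
  have cn: "real (n choose s) \<le> (exp 1 * real n / real s) ^ s" by (rule choose_le_exp_pow[OF s1])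
  have cn2: "real (n choose s) \<le> exp (real s * \<Lambda> / 9)"
  proof -
    have "(exp 1 * real n / real s) ^ s \<le> exp (\<Lambda> / 9) ^ s"
      using ens np sp by (intro power_mono) auto
    also have "\<dots> = exp (real s * \<Lambda> / 9)" by (simp add: exp_of_nat_mult[symmetric])
    finally show ?thesis using cn by linarith
  qed
  have big: "(real (m - u0 choose k) / real (m choose k)) ^ (n - s) \<le> exp (- real s * \<Lambda> / 8)"
  proof -
    have "real (m - u0 choose k) / real (m choose k) \<le> (real (m - u0) / real m) ^ k"
      using km mp by (intro ratio_le) auto
    also have "real (m - u0) / real m = 1 + (- real u0 / real m)"
      using u0m mp by (simp add: of_nat_diff field_simps)
    also have "(1 + (- real u0 / real m)) ^ k \<le> exp (- real u0 / real m) ^ k"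
      using u0m mp by (intro power_mono exp_ge_add_one_self) (auto simp: field_simps)
    finally have r: "real (m - u0 choose k) / real (m choose k) \<le> exp (- real u0 / real m) ^ k" .
    have "(real (m - u0 choose k) / real (m choose k)) ^ (n - s) \<le> (exp (- real u0 / real m) ^ k) ^ (n - s)"
      using r by (intro power_mono) auto
    also have "\<dots> = exp (- real u0 / real m) ^ (k * (n - s))" by (simp add: power_mult)
    also have "\<dots> = exp (real (k * (n - s)) * (- real u0 / real m))" by (rule exp_of_nat_mult[symmetric])
    also have "\<dots> = exp (- (real u0 * real k * real (n - s) / real m))"
      by (intro arg_cong[where f=exp]) (simp only: of_nat_mult, simp add: algebra_simps)
    also have "\<dots> \<le> exp (- real s * \<Lambda> / 8)"
    proof -
      have ns: "real (n - s) \<ge> real n / 2" using sn sn2 by (simp add: of_nat_diff)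
      have "real s * \<Lambda> / 8 = real s / 8 * (real m * \<Lambda>) / real m" using mp by simp
      also have "\<dots> \<le> real s / 8 * (real k ^ 2 * real n) / real m"
        using hk sp mp by (intro divide_right_mono mult_left_mono) (auto simp: \<Lambda>_def)
      also have "\<dots> = (x / 4) * real k * (real n / 2) / real m"
        by (simp add: x_def power2_eq_square)
      also have "\<dots> \<le> real u0 * real k * real (n - s) / real m"
        using u0a ns mp xk sp np by (intro divide_right_mono mult_mono) auto
      finally show ?thesis by simp
    qed
    finally show ?thesis .
  qed
  have part1: "real (n choose s) * (real (m - u0 choose k) / real (m choose k)) ^ (n - s) \<le> exp (- real s / 72)"
  proof -
    have "real (n choose s) * (real (m - u0 choose k) / real (m choose k)) ^ (n - s)
          \<le> exp (real s * \<Lambda> / 9) * exp (- real s * \<Lambda> / 8)"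
      using cn2 big by (intro mult_mono) auto
    also have "\<dots> = exp (- (real s * \<Lambda> / 72))" by (simp add: exp_add[symmetric])
    also have "\<dots> \<le> exp (- real s / 72)" using ln1 sp by (simp add: \<Lambda>_def)
    finally show ?thesis .
  qed
  have tm: "real (n choose s) * (real (m choose u) * (real (u choose k) / real (m choose k)) ^ s) \<le> exp (- x / 8)"
    if u: "u < u0" for u
  proof (cases "u = 0")
    case True
    have "(0::nat) choose k = 0" using k1 by simp
    hence "real (u choose k) / real (m choose k) = 0" using True by simp
    hence z: "(real (u choose k) / real (m choose k)) ^ s = 0" using s1 by simp
    show ?thesis unfolding z by simp
  next
    case False
    have us: "real u < real s * real k / 4" using u unfolding u0_def
      by (metis less_ceiling_iff of_int_of_nat_eq of_nat_less_iff zless_nat_eq_int_zless)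
    have "real u \<le> real m" using us mge x1024 unfolding x_def by linarith
    hence um: "u \<le> m" by simp
    have "real (u choose k) / real (m choose k) \<le> (real u / real m) ^ k"
      using um km mp by (intro ratio_le) auto
    hence "(real (u choose k) / real (m choose k)) ^ s \<le> ((real u / real m) ^ k) ^ s"
      by (intro power_mono) auto
    also have "\<dots> = (real u / real m) ^ (k * s)" by (simp add: power_mult)
    finally have p3: "(real (u choose k) / real (m choose k)) ^ s \<le> (real u / real m) ^ (k * s)" .
    have p2: "real (m choose u) \<le> (exp 1 * real m / real u) ^ u" using False by (intro choose_le_exp_pow) auto
    have "real (n choose s) * (real (m choose u) * (real (u choose k) / real (m choose k)) ^ s)
      \<le> (exp 1 * real n / real s) ^ s * ((exp 1 * real m / real u) ^ u * (real u / real m) ^ (k * s))"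
      using cn p2 p3 by (intro mult_mono) auto
    also have "\<dots> \<le> exp (- x / 8)"
      using small_term[of u s k n m] False us s1 sn k30 skm nm unfolding x_def by (simp add: mult.assoc)
    finally show ?thesis .
  qed
  have part2: "real (n choose s) * (\<Sum>u<u0. real (m choose u) * (real (u choose k) / real (m choose k)) ^ s)
      \<le> exp (- real s / 72)"
  proof -
    have "real (n choose s) * (\<Sum>u<u0. real (m choose u) * (real (u choose k) / real (m choose k)) ^ s)
        = (\<Sum>u<u0. real (n choose s) * (real (m choose u) * (real (u choose k) / real (m choose k)) ^ s))"
      by (simp add: sum_distrib_left)
    also have "\<dots> \<le> (\<Sum>u<u0. exp (- x / 8))" by (intro sum_mono tm) auto
    also have "\<dots> = real u0 * exp (- x / 8)" by simp
    also have "\<dots> \<le> x * exp (- x / 8)" using u0b x1024 by (intro mult_right_mono) (auto simp: x_def)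
    also have "\<dots> \<le> exp (x / 16) * exp (- x / 8)"
    proof (intro mult_right_mono)
      have "exp (x / 16) = exp (x / 32) ^ 2" by (simp add: exp_of_nat_mult[symmetric])
      also have "exp (x / 32) ^ 2 \<ge> (1 + x / 32) ^ 2" using x1024 by (intro power_mono) (auto simp: x_def)
      finally have "exp (x / 16) \<ge> (1 + x / 32) ^ 2" .
      moreover have "(1 + x / 32) ^ 2 \<ge> x"
      proof -
        have "x * x \<ge> 1024 * x" using x1024 by (intro mult_right_mono) (auto simp: x_def)
        moreover have "(1 + x / 32) ^ 2 = 1 + x / 16 + x * x / 1024" by (simp add: power2_eq_square field_simps)
        ultimately show ?thesis using x1024 unfolding x_def by linarith
      qed
      ultimately show "x \<le> exp (x / 16)" by linarith
    qed auto
    also have "\<dots> = exp (- x / 16)" by (simp add: exp_add[symmetric])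
    also have "\<dots> \<le> exp (- real s / 72)" using xk sp by simp
    finally show ?thesis .
  qed
  show ?thesis using part1 part2 unfolding u0_def[symmetric] by (simp add: distrib_left)
qed



lemma final_bound_le:
  fixes n :: nat assumes n1: "n \<ge> 1"
  shows "2 * (real n + 1) * exp (- (exp 1 * real n powr (8/9)) / 72) \<le> 12 * 72^3 * 2 / real n"
proof -
  define t where "t = exp 1 * real n powr (8/9) / 72"
  have np: "real n > 0" using n1 by simp
  have t0: "t \<ge> 0" unfolding t_def by simp
  have "t ^ 3 / fact 3 \<le> exp t" by (rule pow_div_fact_le_exp[OF t0])
  hence et: "t ^ 3 / 6 \<le> exp t" by (simp add: fact_numeral)
  have tge: "t \<ge> real n powr (8/9) / 72"
  proof -
    have "exp (1::real) \<ge> 1" by simp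
    hence "1 * real n powr (8/9) \<le> exp 1 * real n powr (8/9)" by (intro mult_right_mono) auto
    thus ?thesis unfolding t_def by (simp add: divide_right_mono)
  qed
  have "(real n powr (8/9)) ^ 3 = real n powr (8/3)"
    using np by (simp add: powr_realpow[symmetric] powr_powr)
  also have "real n powr (8/3) \<ge> real n powr 2" using n1 by (intro powr_mono) auto
  hence "real n powr (8/3) \<ge> real n ^ 2" using np by (simp add: powr_realpow)
  finally have p3: "(real n powr (8/9)) ^ 3 \<ge> real n ^ 2" .
  have "(real n powr (8/9) / 72) ^ 3 \<le> t ^ 3" using tge by (intro power_mono) auto
  hence t3: "t ^ 3 \<ge> real n ^ 2 / 72^3" using p3 by (simp add: power_divide divide_right_mono) 
  have tp: "t ^ 3 > 0" using t3 np by (smt (verit) divide_pos_pos zero_less_power)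
  have "exp (- t) = 1 / exp t" by (simp add: exp_minus field_simps)
  also have "\<dots> \<le> 1 / (t ^ 3 / 6)" using et tp by (intro divide_left_mono) auto
  also have "\<dots> = 6 / t ^ 3" by simp
  also have "\<dots> \<le> 6 / (real n ^ 2 / 72^3)" using t3 np tp by (intro divide_left_mono) auto
  finally have "exp (- t) \<le> 6 * 72^3 / real n ^ 2" by simp
  hence "2 * (real n + 1) * exp (- t) \<le> 2 * (real n + 1) * (6 * 72^3 / real n ^ 2)"
    using np by (intro mult_left_mono) auto
  also have "\<dots> \<le> 2 * (2 * real n) * (6 * 72^3 / real n ^ 2)"
    using n1 by (intro mult_right_mono mult_left_mono) auto
  also have "\<dots> = 12 * 72^3 * 2 / real n" using np by (simp add: power2_eq_square field_simps)
  finally show ?thesis by (simp add: t_def)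
qed

lemma eventual_bound:
  fixes n m k :: nat
  assumes k1: "1 \<le> k" and km: "k \<le> m" and nm: "n \<le> m"
    and ratio: "real k ^ 2 * real n / (real m * ln (real n)) > 1"
    and ln900: "ln (real n) \<ge> 900"
  shows "measure_pmf.prob (RIG n m k)
            {F. \<exists>C. rig_component n F C \<and>
                    exp 1 * real n powr (8/9) \<le> real (card C) \<and>
                    real (card C) \<le> min (real m / real k) (real n / 2)}
         \<le> 12 * 72^3 * 2 / real n"
proof -
  have np: "real n > 0" using ln900 by (cases "n = 0") auto
  have n1: "n \<ge> 1" using np by simp
  have lnp: "ln (real n) > 0" using ln900 by simp
  have mp: "real m > 0" using np nm by simp
  have den: "real m * ln (real n) > 0" using mp lnp by simp
  have hk: "real m * ln (real n) \<le> real k ^ 2 * real n"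
    using ratio den by (simp add: field_simps)
  have "real n * ln (real n) \<le> real m * ln (real n)" using nm lnp by (intro mult_right_mono) auto
  moreover have "real n * 900 \<le> real n * ln (real n)" using ln900 np by (intro mult_left_mono) auto
  ultimately have "real n * 900 \<le> real k ^ 2 * real n" using hk by linarith
  hence k2: "900 \<le> real k ^ 2" using np by simp
  have k30: "30 \<le> k"
  proof (rule ccontr)
    assume "\<not> 30 \<le> k"
    hence "real k \<le> 29" by simp
    hence "real k ^ 2 \<le> 29 ^ 2" by (intro power_mono) auto
    thus False using k2 by simp
  qed
  define s0 where "s0 = exp 1 * real n powr (8/9)"
  have s0big: "s0 \<ge> 1024"
  proof -
    have "real n powr (8/9) = exp (8/9 * ln (real n))" using np by (simp add: powr_def)
    also have "\<dots> \<ge> 1 + 8/9 * ln (real n)" by (rule exp_ge_add_one_self)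
    finally have "real n powr (8/9) \<ge> 801" using ln900 by simp
    moreover have "exp (1::real) \<ge> 2" using exp_ge_add_one_self[of "1::real"] by simp
    ultimately have "exp 1 * real n powr (8/9) \<ge> 2 * 801" by (intro mult_mono) auto
    thus ?thesis unfolding s0_def by simp
  qed
  define R where "R = {s. s \<le> n \<and> s0 \<le> real s \<and> real s \<le> min (real m / real k) (real n / 2)}"
  have R: "R \<subseteq> {..n}" unfolding R_def by auto
  have sub: "{F. \<exists>C. rig_component n F C \<and>
                    exp 1 * real n powr (8/9) \<le> real (card C) \<and>
                    real (card C) \<le> min (real m / real k) (real n / 2)}
        \<subseteq> {F. \<exists>C. rig_component n F C \<and> card C \<in> R}"
  proof
    fix F assume "F \<in> {F. \<exists>C. rig_component n F C \<and>
                    exp 1 * real n powr (8/9) \<le> real (card C) \<and>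
                    real (card C) \<le> min (real m / real k) (real n / 2)}"
    then obtain C where C: "rig_component n F C" "exp 1 * real n powr (8/9) \<le> real (card C)"
       "real (card C) \<le> min (real m / real k) (real n / 2)" by blast
    have "card C \<le> card {..<n}" using component_closed(1)[OF C(1)] by (intro card_mono) auto
    hence "card C \<le> n" by simp
    hence "card C \<in> R" using C unfolding R_def s0_def by auto
    thus "F \<in> {F. \<exists>C. rig_component n F C \<and> card C \<in> R}" using C(1) by blast
  qed
  have "measure_pmf.prob (RIG n m k)
            {F. \<exists>C. rig_component n F C \<and>
                    exp 1 * real n powr (8/9) \<le> real (card C) \<and>
                    real (card C) \<le> min (real m / real k) (real n / 2)}
        \<le> measure_pmf.prob (RIG n m k) {F. \<exists>C. rig_component n F C \<and> card C \<in> R}"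
    by (rule measure_pmf.finite_measure_mono[OF sub]) simp
  also have "\<dots> \<le> (\<Sum>s\<in>R. real (n choose s) * ((real (m - nat \<lceil>real s * real k / 4\<rceil> choose k) / real (m choose k)) ^ (n - s)
         + (\<Sum>u<nat \<lceil>real s * real k / 4\<rceil>. real (m choose u) * (real (u choose k) / real (m choose k)) ^ s)))"
    by (rule prob_bound[OF R km])
  also have "\<dots> \<le> (\<Sum>s\<in>R. 2 * exp (- s0 / 72))"
  proof (rule sum_mono)
    fix s assume "s \<in> R"
    hence s: "s \<le> n" "s0 \<le> real s" "real s \<le> real m / real k" "real s \<le> real n / 2"
      unfolding R_def by auto
    have kp: "real k > 0" using k1 by simp
    have "real s * real k \<le> real m" using s(3) kp by (simp add: field_simps)
    hence skm: "s * k \<le> m" by (metis of_nat_le_iff of_nat_mult)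
    have "real s * real k \<ge> real s * 1" using k1 s(2) s0big by (intro mult_left_mono) auto
    hence x1024: "real s * real k \<ge> 1024" using s(2) s0big by linarith
    have "real (n choose s) * ((real (m - nat \<lceil>real s * real k / 4\<rceil> choose k) / real (m choose k)) ^ (n - s)
         + (\<Sum>u<nat \<lceil>real s * real k / 4\<rceil>. real (m choose u) * (real (u choose k) / real (m choose k)) ^ s))
         \<le> 2 * exp (- real s / 72)"
      by (rule per_s[OF k1 km nm hk _ k30 _ s(4) skm x1024]) (use ln900 s(2) s0_def in auto)
    also have "\<dots> \<le> 2 * exp (- s0 / 72)" using s(2) by simp
    finally show "real (n choose s) * ((real (m - nat \<lceil>real s * real k / 4\<rceil> choose k) / real (m choose k)) ^ (n - s)
         + (\<Sum>u<nat \<lceil>real s * real k / 4\<rceil>. real (m choose u) * (real (u choose k) / real (m choose k)) ^ s))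
         \<le> 2 * exp (- s0 / 72)" .
  qed
  also have "\<dots> = real (card R) * (2 * exp (- s0 / 72))" by simp
  also have "\<dots> \<le> (real n + 1) * (2 * exp (- s0 / 72))"
  proof (intro mult_right_mono)
    have "card R \<le> card {..n}" using R by (intro card_mono) auto
    thus "real (card R) \<le> real n + 1" by simp
  qed simp
  also have "\<dots> = 2 * (real n + 1) * exp (- (exp 1 * real n powr (8/9)) / 72)"
    by (simp add: s0_def)
  also have "\<dots> \<le> 12 * 72^3 * 2 / real n" by (rule final_bound_le[OF n1])
  finally show ?thesis .
qed

theorem lemma7:
  fixes k m :: "nat \<Rightarrow> nat"
  assumes km: "\<And>n. 1 \<le> k n \<and> k n \<le> m n"
    and mn: "\<And>n. m n \<ge> n"
    and lim: "liminf (\<lambda>n. ereal (real (k n) ^ 2 * real n / (real (m n) * ln (real n)))) > 1"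
  shows "(\<lambda>n. measure_pmf.prob (RIG n (m n) (k n))
            {F. \<exists>C. rig_component n F C \<and>
                    exp 1 * real n powr (8/9) \<le> real (card C) \<and>
                    real (card C) \<le> min (real (m n) / real (k n)) (real n / 2)})
         \<longlonglongrightarrow> 0"
proof (rule tendsto_sandwich)
  have ev1: "eventually (\<lambda>n. ereal (real (k n) ^ 2 * real n / (real (m n) * ln (real n))) > 1) sequentially"
    by (rule less_LiminfD[OF lim])
  have ev2: "eventually (\<lambda>n. ln (real n) \<ge> 900) sequentially"
  proof (rule eventually_sequentiallyI[of "nat \<lceil>exp (900::real)\<rceil>"])
    fix n assume "nat \<lceil>exp (900::real)\<rceil> \<le> n"
    hence "exp (900::real) \<le> real n" by linarith
    moreover have "exp (900::real) > 0" by simp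
    ultimately have "real n > 0" by linarith
    hence "ln (exp 900) \<le> ln (real n)" using \<open>exp (900::real) \<le> real n\<close>
      by (subst ln_le_cancel_iff) auto
    thus "ln (real n) \<ge> 900" by simp
  qed
  show "eventually (\<lambda>n. measure_pmf.prob (RIG n (m n) (k n))
            {F. \<exists>C. rig_component n F C \<and>
                    exp 1 * real n powr (8/9) \<le> real (card C) \<and>
                    real (card C) \<le> min (real (m n) / real (k n)) (real n / 2)}
        \<le> 12 * 72^3 * 2 / real n) sequentially"
    using ev1 ev2
  proof eventually_elim
    case (elim n)
    show ?case
      by (rule eventual_bound) (use elim km[of n] mn[of n] in auto)
  qed
  show "eventually (\<lambda>n. 0 \<le> measure_pmf.prob (RIG n (m n) (k n))
            {F. \<exists>C. rig_component n F C \<and>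
                    exp 1 * real n powr (8/9) \<le> real (card C) \<and>
                    real (card C) \<le> min (real (m n) / real (k n)) (real n / 2)}) sequentially"
    by simp
  show "(\<lambda>n. 0) \<longlonglongrightarrow> (0::real)" by simp
  show "(\<lambda>n. 12 * 72^3 * 2 / real n) \<longlonglongrightarrow> (0::real)" by (rule lim_const_over_n)
qed


end
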